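(* Let $b\ge 1$ be an integer and let $a_1<a_2<\dots<a_l$ be integers such that $a_{i+1}-a_i\le b$ for all $1\le i<l$. Set $A=\{a_1,a_2,\dots,a_l\}$. Then for every integer $n>2b^2$, \[ nA=(n-2b^2)\{a_1,a_l\}+2b^2A. \]
   Context: For a subset $A$ of an abelian group and a positive integer $n$, $nA=A+A+\dots+A$ ($n$ summands) denotes the $n$-fold sumset $\{c_1+\dots+c_n : c_i\in A\}$ (repetitions allowed); sums of sets are Minkowski sums $X+Y=\{x+y: x\in X, y\in Y\}$. *)

theory Defs
  imports Main
begin

definition msum :: "int set \<Rightarrow> int set \<Rightarrow> int set" where
  "msum X Y = {x + y | x y. x \<in> X \<and> y \<in> Y}"

fun nfold :: "nat \<Rightarrow> int set \<Rightarrow> int set" where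
  "nfold 0 A = {0}"
| "nfold (Suc n) A = msum A (nfold n A)"

end

theory Submission
  imports Defs
begin

lemma msum_mono: "X \<subseteq> X' \<Longrightarrow> Y \<subseteq> Y' \<Longrightarrow> msum X Y \<subseteq> msum X' Y'"
  unfolding msum_def by blast

lemma msum_comm: "msum X Y = msum Y X"
  unfolding msum_def by (auto simp: add.commute) (metis add.commute)+

lemma msum_assoc: "msum X (msum Y Z) = msum (msum X Y) Z"
  unfolding msum_def by auto (metis add.assoc)+

lemma msum_zero: "msum {0} Y = Y" unfolding msum_def by auto

lemma msum_zero2: "msum Y {0} = Y" unfolding msum_def by auto

lemma nfold_add: "nfold (p+q) A = msum (nfold p A) (nfold q A)"
  by (induction p) (simp_all add: msum_zero msum_assoc)

lemma nfold_mono: "E \<subseteq> A \<Longrightarrow> nfold p E \<subseteq> nfold p A"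
  by (induction p) (simp_all add: msum_mono)

lemma nfold_sum:
  assumes "finite S" "\<forall>i\<in>S. c i \<in> A"
  shows "sum c S \<in> nfold (card S) A"
  using assms
proof (induction S rule: finite_induct)
  case empty then show ?case by simp
next
  case (insert x F)
  then show ?case by (auto simp: msum_def)
qed

lemma nfold_rep: "x \<in> nfold n A \<Longrightarrow> \<exists>c. (\<forall>i<n. c i \<in> A) \<and> x = (\<Sum>i<n. c i)"
proof (induction n arbitrary: x)
  case 0 then show ?case by simp
next
  case (Suc n)
  then obtain y z where y: "y \<in> A" and z: "z \<in> nfold n A" and x: "x = y + z"
    by (auto simp: msum_def)
  obtain c where c: "\<forall>i<n. c i \<in> A" "z = (\<Sum>i<n. c i)" using Suc.IH[OF z] by blast
  define c' where "c' = c(n := y)"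
  have "(\<Sum>i<n. c' i) = (\<Sum>i<n. c i)" by (rule sum.cong) (auto simp: c'_def)
  hence "(\<Sum>i<Suc n. c' i) = x" using x c by (simp add: c'_def)
  moreover have "\<forall>i<Suc n. c' i \<in> A" using c y by (auto simp: c'_def less_Suc_eq)
  ultimately show ?case by metis
qed

lemma low_subset:
  fixes c :: "nat \<Rightarrow> int"
  assumes "finite S" "p \<le> card S"
  shows "\<exists>L\<subseteq>S. card L = p \<and> (\<forall>i\<in>L. \<forall>j\<in>S - L. c i \<le> c j)"
  using assms(2)
proof (induction p)
  case 0 then show ?case by auto
next
  case (Suc p)
  then obtain L where L: "L \<subseteq> S" "card L = p" "\<forall>i\<in>L. \<forall>j\<in>S - L. c i \<le> c j" by auto
  have finL: "finite L" using L(1) assms(1) finite_subset by blast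
  have fin: "finite (S - L)" using assms(1) by auto
  have ne: "S - L \<noteq> {}"
  proof
    assume "S - L = {}"
    hence "S \<subseteq> L" by auto
    hence "card S \<le> card L" using card_mono finL by blast
    thus False using Suc.prems L(2) by simp
  qed
  have "Min (c ` (S-L)) \<in> c ` (S-L)" using fin ne by simp
  then obtain j0 where j0: "j0 \<in> S - L" "c j0 = Min (c ` (S-L))" by auto
  have j0min: "\<forall>j\<in>S - L. c j0 \<le> c j" using j0 fin by auto
  have "card (insert j0 L) = Suc p" using j0 finL L(2) by simp
  moreover have "insert j0 L \<subseteq> S" using j0 L by auto
  moreover have "\<forall>i\<in>insert j0 L. \<forall>j\<in>S - insert j0 L. c i \<le> c j" using L(3) j0min by auto
  ultimately show ?case by blast
qed

lemma pigeon:
  fixes f :: "nat \<Rightarrow> int" and b :: nat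
  assumes "b \<ge> 1" "finite S" "\<forall>i\<in>S. 1 \<le> f i \<and> f i \<le> int b" "b*b \<le> card S"
  shows "\<exists>d. 1 \<le> d \<and> d \<le> int b \<and> b \<le> card {i\<in>S. f i = d}"
proof (rule ccontr)
  assume "\<not> ?thesis"
  hence lt: "\<forall>d\<in>{1..int b}. card {i\<in>S. f i = d} \<le> b - 1" by force
  have "S = (\<Union>d\<in>{1..int b}. {i\<in>S. f i = d})" using assms(3) by auto
  hence "card S \<le> (\<Sum>d\<in>{1..int b}. card {i\<in>S. f i = d})"
    by (metis card_UN_le finite_atLeastAtMost_int)
  also have "\<dots> \<le> (\<Sum>d\<in>{1..int b}. b - 1)" by (rule sum_mono) (use lt in auto)
  also have "\<dots> = b * (b - 1)" by simp
  also have "\<dots> < b * b" using assms(1) by simp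
  finally show False using assms(4) by simp
qed

lemma sum_split2:
  fixes f :: "nat \<Rightarrow> int"
  assumes "finite S" "I \<subseteq> S" "J \<subseteq> S" "I \<inter> J = {}" "\<forall>i\<in>S - (I \<union> J). f i = 0"
  shows "sum f S = sum f I + sum f J"
proof -
  have "sum f S = sum f (I \<union> J)"
    by (rule sum.mono_neutral_right) (use assms in auto)
  also have "\<dots> = sum f I + sum f J"
    by (rule sum.union_disjoint) (use assms finite_subset in auto)
  finally show ?thesis .
qed



lemma key:
  fixes A :: "int set" and lo hi :: int and b k :: nat
  assumes b1: "b \<ge> 1" and bnd: "\<forall>u\<in>A. lo \<le> u \<and> u \<le> hi"
    and down: "\<forall>u\<in>A. u \<noteq> lo \<longrightarrow> (\<exists>d. 1 \<le> d \<and> d \<le> int b \<and> u - d \<in> A)"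
    and up: "\<forall>u\<in>A. u \<noteq> hi \<longrightarrow> (\<exists>e. 1 \<le> e \<and> e \<le> int b \<and> u + e \<in> A)"
    and k: "2 * b^2 < k"
    and c0: "\<forall>i<k. c0 i \<in> A"
  shows "\<exists>c'. (\<forall>i<k. c' i \<in> A) \<and> (\<Sum>i<k. c' i) = (\<Sum>i<k. c0 i) \<and> (\<exists>j<k. c' j = lo \<or> c' j = hi)"
proof -
  define Bd where "Bd = lo^2 + hi^2"
  have sq: "u^2 \<le> Bd" if "u \<in> A" for u
  proof (cases "u \<ge> 0")
    case True
    hence "u^2 \<le> hi^2" using bnd that by (intro power_mono) auto
    thus ?thesis unfolding Bd_def by (simp add: add_increasing)
  next
    case False
    hence "(-u)^2 \<le> (-lo)^2" using bnd that by (intro power_mono) auto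
    thus ?thesis unfolding Bd_def by (simp add: add_increasing2)
  qed
  have sqsum: "(\<Sum>i<k. (c i)^2) \<le> int k * Bd" if "\<forall>i<k. c i \<in> A" for c
  proof -
    have "(\<Sum>i<k. (c i)^2) \<le> (\<Sum>i<k. Bd)" by (rule sum_mono) (use that sq in auto)
    thus ?thesis by simp
  qed
  have main: "\<forall>c. (\<forall>i<k. c i \<in> A) \<longrightarrow> nat (int k * Bd - (\<Sum>i<k. (c i)^2)) = N \<longrightarrow>
     (\<exists>c'. (\<forall>i<k. c' i \<in> A) \<and> (\<Sum>i<k. c' i) = (\<Sum>i<k. c i) \<and> (\<exists>j<k. c' j = lo \<or> c' j = hi))"
    for N
  proof (induction N rule: less_induct)
    case (less N)
    show ?case
    proof (intro allI impI)
      fix c assume cA: "\<forall>i<k. c i \<in> A" and cN: "nat (int k * Bd - (\<Sum>i<k. (c i)^2)) = N"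
      show "\<exists>c'. (\<forall>i<k. c' i \<in> A) \<and> (\<Sum>i<k. c' i) = (\<Sum>i<k. c i) \<and> (\<exists>j<k. c' j = lo \<or> c' j = hi)"
      proof (cases "\<exists>j<k. c j = lo \<or> c j = hi")
        case True then show ?thesis using cA by blast
      next
        case False
        hence int: "\<forall>i<k. c i \<noteq> lo \<and> c i \<noteq> hi" by auto
        define D where "D i = (SOME d. 1 \<le> d \<and> d \<le> int b \<and> c i - d \<in> A)" for i
        define U where "U i = (SOME e. 1 \<le> e \<and> e \<le> int b \<and> c i + e \<in> A)" for i
        have D: "1 \<le> D i \<and> D i \<le> int b \<and> c i - D i \<in> A" if "i < k" for i
          unfolding D_def by (rule someI_ex) (use down cA int that in blast)
        have U: "1 \<le> U i \<and> U i \<le> int b \<and> c i + U i \<in> A" if "i < k" for i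
          unfolding U_def by (rule someI_ex) (use up cA int that in blast)
        have bb: "b*b \<le> card {..<k}" using k by (simp add: power2_eq_square)
        obtain L where L: "L \<subseteq> {..<k}" "card L = b*b" "\<forall>i\<in>L. \<forall>j\<in>{..<k} - L. c i \<le> c j"
          using low_subset[of "{..<k}" "b*b" c] bb by auto
        define H where "H = {..<k} - L"
        have finL: "finite L" using L(1) finite_subset by blast
        have cardH: "card H = k - b*b" unfolding H_def using L finL by (simp add: card_Diff_subset)
        hence cardH': "b*b \<le> card H" using k by (simp add: power2_eq_square)
        obtain d where d: "1 \<le> d" "d \<le> int b" "b \<le> card {i\<in>L. D i = d}"
          using pigeon[of b L D] L D b1 finL bb by (auto simp: subset_iff)
        obtain e where e: "1 \<le> e" "e \<le> int b" "b \<le> card {i\<in>H. U i = e}"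
          using pigeon[of b H U] U b1 cardH' by (auto simp: H_def)
        obtain I where I: "I \<subseteq> {i\<in>L. D i = d}" "card I = nat e" "finite I"
        proof -
          have "nat e \<le> card {i\<in>L. D i = d}" unfolding nat_le_iff using e(2) d(3) by linarith
          thus ?thesis using obtain_subset_with_card_n that by blast
        qed
        obtain J where J: "J \<subseteq> {i\<in>H. U i = e}" "card J = nat d" "finite J"
        proof -
          have "nat d \<le> card {i\<in>H. U i = e}" unfolding nat_le_iff using d(2) e(3) by linarith
          thus ?thesis using obtain_subset_with_card_n that by blast
        qed
        define c' where "c' i = (if i \<in> I then c i - d else if i \<in> J then c i + e else c i)" for i
        have IJ: "I \<inter> J = {}" using I J H_def by auto
        have Ik: "I \<subseteq> {..<k}" "J \<subseteq> {..<k}" using I J L H_def by auto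
        have c'A: "\<forall>i<k. c' i \<in> A"
        proof (intro allI impI)
          fix i assume i: "i < k"
          show "c' i \<in> A"
          proof (cases "i \<in> I")
            case True
            hence "D i = d" using I by auto
            thus ?thesis using D[OF i] True by (simp add: c'_def)
          next
            case False
            show ?thesis
            proof (cases "i \<in> J")
              case True
              hence "U i = e" using J by auto
              thus ?thesis using U[OF i] True False by (simp add: c'_def)
            qed (use False cA i in \<open>simp add: c'_def\<close>)
          qed
        qed
        define \<delta> where "\<delta> i = c' i - c i" for i
        have "(\<Sum>i<k. \<delta> i) = sum \<delta> I + sum \<delta> J"
          by (rule sum_split2) (use Ik IJ in \<open>auto simp: \<delta>_def c'_def\<close>)
        also have "sum \<delta> I = sum (\<lambda>i. - d) I" by (rule sum.cong) (auto simp: \<delta>_def c'_def)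
        also have "\<dots> = - e * d" using I e by simp
        also have "sum \<delta> J = sum (\<lambda>i. e) J" by (rule sum.cong) (use IJ in \<open>auto simp: \<delta>_def c'_def\<close>)
        also have "\<dots> = d * e" using J d by simp
        finally have s\<delta>: "(\<Sum>i<k. \<delta> i) = 0" by simp
        have "(\<Sum>i<k. c' i) = (\<Sum>i<k. c i + \<delta> i)" by (simp add: \<delta>_def)
        also have "\<dots> = (\<Sum>i<k. c i)" using s\<delta> by (simp add: sum.distrib)
        finally have ssum: "(\<Sum>i<k. c' i) = (\<Sum>i<k. c i)" .
        have Hne: "H \<noteq> {}" using cardH' b1 by (metis card.empty le_zero_eq nat_0_less_mult_iff not_one_le_zero zero_less_iff_neq_zero)
        have finH: "finite H" by (simp add: H_def)
        define M where "M = Min (c ` H)"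
        have IM: "c i \<le> M" if "i \<in> I" for i
          unfolding M_def using that I L(3) H_def finH Hne by auto
        have JM: "M \<le> c j" if "j \<in> J" for j
          unfolding M_def using that J finH by auto
        define \<phi> where "\<phi> i = (c' i)^2 - (c i)^2" for i
        have "(\<Sum>i<k. \<phi> i) = sum \<phi> I + sum \<phi> J"
          by (rule sum_split2) (use Ik IJ in \<open>auto simp: \<phi>_def c'_def\<close>)
        also have "sum \<phi> I \<ge> sum (\<lambda>i. d*d - 2*d*M) I"
        proof (rule sum_mono)
          fix i assume i: "i \<in> I"
          have "d * c i \<le> d * M" using IM[OF i] d by (intro mult_left_mono) auto
          moreover have "\<phi> i = d*d - 2*d*c i" using i by (simp add: \<phi>_def c'_def power2_eq_square algebra_simps)
          ultimately show "d*d - 2*d*M \<le> \<phi> i" by simp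
        qed
        hence "sum \<phi> I \<ge> e * (d*d - 2*d*M)" using I e by simp
        moreover have "sum \<phi> J \<ge> sum (\<lambda>i. e*e + 2*e*M) J"
        proof (rule sum_mono)
          fix i assume i: "i \<in> J"
          have "e * M \<le> e * c i" using JM[OF i] e by (intro mult_left_mono) auto
          moreover have "\<phi> i = e*e + 2*e*c i" using i IJ by (auto simp: \<phi>_def c'_def power2_eq_square algebra_simps)
          ultimately show "e*e + 2*e*M \<le> \<phi> i" by simp
        qed
        hence "sum \<phi> J \<ge> d * (e*e + 2*e*M)" using J d by simp
        moreover have "e * (d*d - 2*d*M) + d * (e*e + 2*e*M) = e*d*d + d*e*e" by (simp add: algebra_simps)
        moreover have "e*d*d + d*e*e > 0" using d e by (simp add: add_pos_pos)
        ultimately have "(\<Sum>i<k. \<phi> i) > 0" by linarith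
        hence gt: "(\<Sum>i<k. (c' i)^2) > (\<Sum>i<k. (c i)^2)" by (simp add: \<phi>_def sum_subtractf)
        have le: "(\<Sum>i<k. (c' i)^2) \<le> int k * Bd" using sqsum c'A by blast
        have lt: "nat (int k * Bd - (\<Sum>i<k. (c' i)^2)) < N" using cN gt le by linarith
        obtain c'' where "(\<forall>i<k. c'' i \<in> A) \<and> (\<Sum>i<k. c'' i) = (\<Sum>i<k. c' i) \<and> (\<exists>j<k. c'' j = lo \<or> c'' j = hi)"
          using less.IH[OF lt] c'A by blast
        thus ?thesis using ssum by metis
      qed
    qed
  qed
  show ?thesis using main c0 by blast
qed


theorem mainTheorem1:
  fixes b l n :: nat and a :: "nat \<Rightarrow> int"
  assumes "b \<ge> 1" and "l \<ge> 1"
    and "\<And>i. 1 \<le> i \<Longrightarrow> i < l \<Longrightarrow> a i < a (Suc i)"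
    and "\<And>i. 1 \<le> i \<Longrightarrow> i < l \<Longrightarrow> a (Suc i) - a i \<le> int b"
    and "n > 2 * b^2"
  shows "nfold n (a ` {1..l}) =
         msum (nfold (n - 2 * b^2) {a 1, a l}) (nfold (2 * b^2) (a ` {1..l}))"
proof -
  define A where "A = a ` {1..l}"
  define m where "m = 2 * b^2"
  define E where "E = {a 1, a l}"
  have mono: "a i \<le> a j" if "1 \<le> i" "i \<le> j" "j \<le> l" for i j
    using that
  proof (induction j)
    case 0 then show ?case by simp
  next
    case (Suc j)
    show ?case
    proof (cases "i = Suc j")
      case False
      hence "a i \<le> a j" using Suc by simp
      moreover have "a j < a (Suc j)" using assms(3)[of j] Suc False by simp
      ultimately show ?thesis by simp
    qed simp
  qed
  have bnd: "\<forall>u\<in>A. a 1 \<le> u \<and> u \<le> a l" unfolding A_def using mono by auto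
  have down: "\<forall>u\<in>A. u \<noteq> a 1 \<longrightarrow> (\<exists>d. 1 \<le> d \<and> d \<le> int b \<and> u - d \<in> A)"
  proof (intro ballI impI)
    fix u assume u: "u \<in> A" "u \<noteq> a 1"
    then obtain j where j: "j \<in> {1..l}" "u = a j" unfolding A_def by auto
    hence j2: "j \<ge> 2" using u by (cases "j = 1") auto
    have s: "Suc (j-1) = j" using j2 by simp
    have "a (j-1) < a j" "a j - a (j-1) \<le> int b"
      using assms(3)[of "j-1"] assms(4)[of "j-1"] j j2 s by auto
    moreover have "a (j-1) \<in> A" unfolding A_def using j j2 by (intro imageI) auto
    ultimately show "\<exists>d. 1 \<le> d \<and> d \<le> int b \<and> u - d \<in> A"
      by (intro exI[of _ "a j - a (j-1)"]) (auto simp: j)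
  qed
  have up: "\<forall>u\<in>A. u \<noteq> a l \<longrightarrow> (\<exists>e. 1 \<le> e \<and> e \<le> int b \<and> u + e \<in> A)"
  proof (intro ballI impI)
    fix u assume u: "u \<in> A" "u \<noteq> a l"
    then obtain j where j: "j \<in> {1..l}" "u = a j" unfolding A_def by auto
    hence j2: "j < l" using u by (cases "j = l") auto
    have "a j < a (Suc j)" "a (Suc j) - a j \<le> int b"
      using assms(3)[of j] assms(4)[of j] j j2 by auto
    moreover have "a (Suc j) \<in> A" unfolding A_def using j j2 by auto
    ultimately show "\<exists>e. 1 \<le> e \<and> e \<le> int b \<and> u + e \<in> A"
      by (intro exI[of _ "a (Suc j) - a j"]) (auto simp: j)
  qed
  have KC: "nfold (Suc m) A \<subseteq> msum E (nfold m A)"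
  proof
    fix x assume "x \<in> nfold (Suc m) A"
    then obtain c where c: "\<forall>i<Suc m. c i \<in> A" "x = (\<Sum>i<Suc m. c i)" using nfold_rep by blast
    obtain c' where c': "\<forall>i<Suc m. c' i \<in> A" "(\<Sum>i<Suc m. c' i) = (\<Sum>i<Suc m. c i)"
      "\<exists>j<Suc m. c' j = a 1 \<or> c' j = a l"
      using key[of b A "a 1" "a l" "Suc m" c] assms(1) bnd down up c(1) by (auto simp: m_def)
    then obtain j where j: "j < Suc m" "c' j = a 1 \<or> c' j = a l" by blast
    have "sum c' {..<Suc m} = c' j + sum c' ({..<Suc m} - {j})" using j(1)
      by (intro sum.remove) auto
    hence "x = c' j + sum c' ({..<Suc m} - {j})" using c(2) c'(2) by simp
    moreover have "sum c' ({..<Suc m} - {j}) \<in> nfold m A"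
      using nfold_sum[of "{..<Suc m} - {j}" c' A] c'(1) j(1) by auto
    moreover have "c' j \<in> E" using j E_def by auto
    ultimately show "x \<in> msum E (nfold m A)" unfolding msum_def by blast
  qed
  have ind: "nfold (Suc m + t) A \<subseteq> msum (nfold (Suc t) E) (nfold m A)" for t
  proof (induction t)
    case 0 then show ?case using KC by (simp add: msum_zero2)
  next
    case (Suc t)
    have "nfold (Suc m + Suc t) A = msum A (nfold (Suc m + t) A)" by simp
    also have "\<dots> \<subseteq> msum A (msum (nfold (Suc t) E) (nfold m A))"
      by (rule msum_mono) (use Suc in auto)
    also have "\<dots> = msum (nfold (Suc t) E) (msum A (nfold m A))"
      by (metis msum_assoc msum_comm)
    also have "\<dots> = msum (nfold (Suc t) E) (nfold (Suc m) A)" by simp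
    also have "\<dots> \<subseteq> msum (nfold (Suc t) E) (msum E (nfold m A))"
      by (rule msum_mono) (use KC in auto)
    also have "\<dots> = msum (nfold (Suc (Suc t)) E) (nfold m A)"
      by (metis msum_assoc msum_comm nfold.simps(2))
    finally show ?case .
  qed
  have nm: "n = Suc m + (n - Suc m)" "n - m = Suc (n - Suc m)" using assms(5) m_def by auto
  have sub: "nfold n A \<subseteq> msum (nfold (n - m) E) (nfold m A)"
    using ind[of "n - Suc m"] nm by simp
  have EA: "E \<subseteq> A" unfolding E_def A_def using assms(2) by auto
  have "msum (nfold (n - m) E) (nfold m A) \<subseteq> msum (nfold (n - m) A) (nfold m A)"
    by (rule msum_mono) (use nfold_mono EA in auto)
  also have "\<dots> = nfold (n - m + m) A" by (simp add: nfold_add)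
  also have "\<dots> = nfold n A" using nm by simp
  finally have sup: "msum (nfold (n - m) E) (nfold m A) \<subseteq> nfold n A" .
  show ?thesis using sub sup unfolding A_def m_def E_def by blast
qed

end
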